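(* Let $\pi,\pi'\in\Pi$, $V\in\mathcal F$, and integers $d\ge1$, $h\ge0$; set $J=T_\pi^hV$ and $B'_\gamma=\gamma A'_1+\gamma^{d+h}A'_{d+h}$. Under the concentrability assumption below, \[ \|T^dV^{\pi}-T_{\pi'}V^{\pi}\|_{1,\rho_1}\;\le\;B'_\gamma\,\|V-V^{\pi}\|_{1,\rho_0}+\|T^dJ-T_{\pi'}V\|_{1,\rho_1}. \]
   Context: Consider a discounted infinite-horizon Markov decision process with (measurable) state space $\mathcal S$, finite action set $\mathcal A$, reward function $r:\mathcal S\times\mathcal A\to[0,R_{\max}]$, transition kernel $p(\cdot\mid s,a)$, and discount factor $\gamma\in[0,1)$. Let $V_{\max}=R_{\max}/(1-\gamma)$ and let $\mathcal F$ be the set of bounded measurable functions $\mathcal S\to[0,V_{\max}]$. Let $\Pi$ be the set of stationary deterministic (measurable) policies $\pi:\mathcal S\to\mathcal A$; $V^\pi(s)=\mathbf E[\sum_{t\ge0}\gamma^t r(s_t,\pi(s_t))]$ with $s_0=s$, $s_{t+1}\sim p(\cdot\mid s_t,\pi(s_t))$. For $V\in\mathcal F$: $(T_\pi V)(s)=r(s,\pi(s))+\gamma\int V(\tilde s)\,p(d\tilde s\mid s,\pi(s))$; $(TV)(s)=\max_{a\in\mathcal A}[r(s,a)+\gamma\int V(\tilde s)\,p(d\tilde s\mid s,a)]$; $T^d$, $T_\pi^h$ denote iterated compositions ($T_\pi^0$ is the identity). For a measure $\nu$ on $\mathcal S$, $(\nu P_\pi)(d\tilde s)=\int p(d\tilde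 s\mid s,\pi(s))\,\nu(ds)$. For a measure $\mu$ and measurable $f$, $\|f\|_{1,\mu}=\int|f|\,d\mu$. Let $\rho_0,\rho_1$ be probability distributions on $\mathcal S$. Concentrability assumption: for every $m\ge1$ and every $\mu_1,\ldots,\mu_m\in\Pi$, the measure $\rho_1P_{\mu_1}\cdots P_{\mu_m}$ is absolutely continuous with respect to $\rho_0$, and $A'_m=\sup_{\mu_1,\ldots,\mu_m\in\Pi}\bigl\|\frac{d\,\rho_1P_{\mu_1}\cdots P_{\mu_m}}{d\rho_0}\bigr\|_\infty<\infty$. *)

theory Defs
  imports "HOL-Probability.Probability"
begin

definition Tpol :: "('s \<Rightarrow> 'a \<Rightarrow> 's measure) \<Rightarrow> ('s \<Rightarrow> 'a \<Rightarrow> real) \<Rightarrow> real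
    \<Rightarrow> ('s \<Rightarrow> 'a) \<Rightarrow> ('s \<Rightarrow> real) \<Rightarrow> ('s \<Rightarrow> real)" where
  "Tpol p r \<gamma> \<pi> V = (\<lambda>s. r s (\<pi> s) + \<gamma> * (\<integral>t. V t \<partial>(p s (\<pi> s))))"

definition Topt :: "'a set \<Rightarrow> ('s \<Rightarrow> 'a \<Rightarrow> 's measure) \<Rightarrow> ('s \<Rightarrow> 'a \<Rightarrow> real) \<Rightarrow> real
    \<Rightarrow> ('s \<Rightarrow> real) \<Rightarrow> ('s \<Rightarrow> real)" where
  "Topt A p r \<gamma> V = (\<lambda>s. Max ((\<lambda>a. r s a + \<gamma> * (\<integral>t. V t \<partial>(p s a))) ` A))"

definition push :: "('s \<Rightarrow> 'a \<Rightarrow> 's measure) \<Rightarrow> 's measure \<Rightarrow> ('s \<Rightarrow> 'a) \<Rightarrow> 's measure" where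
  "push p \<nu> \<pi> = \<nu> \<bind> (\<lambda>s. p s (\<pi> s))"

definition state_dist :: "'s measure \<Rightarrow> ('s \<Rightarrow> 'a \<Rightarrow> 's measure) \<Rightarrow> ('s \<Rightarrow> 'a) \<Rightarrow> 's \<Rightarrow> nat \<Rightarrow> 's measure" where
  "state_dist M p \<pi> s t = ((\<lambda>\<nu>. push p \<nu> \<pi>) ^^ t) (return M s)"

(* V^pi(s) = E[sum_t gamma^t r(s_t, pi s_t)] = sum_t gamma^t E[r(s_t, pi s_t)] *)
definition Vpol :: "'s measure \<Rightarrow> ('s \<Rightarrow> 'a \<Rightarrow> 's measure) \<Rightarrow> ('s \<Rightarrow> 'a \<Rightarrow> real) \<Rightarrow> real
    \<Rightarrow> ('s \<Rightarrow> 'a) \<Rightarrow> 's \<Rightarrow> real" where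
  "Vpol M p r \<gamma> \<pi> s = (\<Sum>t. \<gamma> ^ t * (\<integral>x. r x (\<pi> x) \<partial>(state_dist M p \<pi> s t)))"

definition policies :: "'s measure \<Rightarrow> 'a set \<Rightarrow> ('s \<Rightarrow> 'a) set" where
  "policies M A = M \<rightarrow>\<^sub>M count_space A"

definition push_list :: "('s \<Rightarrow> 'a \<Rightarrow> 's measure) \<Rightarrow> 's measure \<Rightarrow> ('s \<Rightarrow> 'a) list \<Rightarrow> 's measure" where
  "push_list p \<rho> \<mu>s = foldl (push p) \<rho> \<mu>s"

definition conc_coeff :: "'s measure \<Rightarrow> 'a set \<Rightarrow> ('s \<Rightarrow> 'a \<Rightarrow> 's measure)
    \<Rightarrow> 's measure \<Rightarrow> 's measure \<Rightarrow> nat \<Rightarrow> ennreal" where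
  "conc_coeff M A p \<rho>0 \<rho>1 m =
     (SUP \<mu>s \<in> {\<mu>s. length \<mu>s = m \<and> set \<mu>s \<subseteq> policies M A}.
        esssup \<rho>0 (RN_deriv \<rho>0 (push_list p \<rho>1 \<mu>s)))"

definition norm1 :: "'s measure \<Rightarrow> ('s \<Rightarrow> real) \<Rightarrow> real" where
  "norm1 \<mu> f = (\<integral>x. \<bar>f x\<bar> \<partial>\<mu>)"

end

theory Submission imports Defs begin

lemma selector:
  fixes g :: "'a \<Rightarrow> 's \<Rightarrow> real"
  assumes "finite F" "F \<noteq> {}" "\<forall>a\<in>F. g a \<in> borel_measurable M"
  shows "\<exists>\<mu>. \<mu> \<in> M \<rightarrow>\<^sub>M count_space F \<and> (\<forall>s\<in>space M. \<forall>a\<in>F. g a s \<le> g (\<mu> s) s)"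
  using assms
proof (induction F rule: finite_ne_induct)
  case (singleton x)
  have "(\<lambda>_. x) \<in> M \<rightarrow>\<^sub>M count_space {x}" by simp
  then show ?case by blast
next
  case (insert x F)
  then obtain \<mu> where mu: "\<mu> \<in> M \<rightarrow>\<^sub>M count_space F" and le: "\<forall>s\<in>space M. \<forall>a\<in>F. g a s \<le> g (\<mu> s) s"
    by blast
  define \<mu>' where "\<mu>' s = (if g (\<mu> s) s \<le> g x s then x else \<mu> s)" for s
  have gmu: "(\<lambda>s. g (\<mu> s) s) \<in> borel_measurable M"
    by (rule measurable_compose_countable'[OF _ mu]) (use insert in \<open>auto intro: countable_finite\<close>)
  have mu2: "\<mu> \<in> M \<rightarrow>\<^sub>M count_space (insert x F)"
    by (rule measurable_compose_countable'[where f="\<lambda>a s. a", OF _ mu]) (use insert in \<open>auto intro: countable_finite\<close>)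
  have gx: "g x \<in> borel_measurable M" using insert by auto
  have "\<mu>' \<in> M \<rightarrow>\<^sub>M count_space (insert x F)"
    unfolding \<mu>'_def
    by (rule measurable_If[OF measurable_const mu2]) (use gmu gx in \<open>auto intro: borel_measurable_le\<close>)
  moreover have "\<forall>s\<in>space M. \<forall>a\<in>insert x F. g a s \<le> g (\<mu>' s) s"
    proof (intro ballI)
    fix s a assume s: "s \<in> space M" and a: "a \<in> insert x F"
    show "g a s \<le> g (\<mu>' s) s"
    proof (cases "g (\<mu> s) s \<le> g x s")
      case True
      have e: "\<mu>' s = x" unfolding \<mu>'_def using True by simp
      show ?thesis
      proof (cases "a = x")
        case True then show ?thesis using e by simp
      next
        case False
        then have "a \<in> F" using a by simp
        then have "g a s \<le> g (\<mu> s) s" using le s by blast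
        then show ?thesis using e \<open>g (\<mu> s) s \<le> g x s\<close> by simp
      qed
    next
      case False
      have e: "\<mu>' s = \<mu> s" unfolding \<mu>'_def using False by simp
      show ?thesis
      proof (cases "a = x")
        case True then show ?thesis using e False by simp
      next
        case False
        then have "a \<in> F" using a by simp
        then show ?thesis using le s e by simp
      qed
    qed
  qed
  ultimately show ?case by blast
qed

locale mdp =
  fixes M :: "'s measure" and A :: "'a set" and p :: "'s \<Rightarrow> 'a \<Rightarrow> 's measure"
    and r :: "'s \<Rightarrow> 'a \<Rightarrow> real" and \<gamma> Rmax :: real
  assumes A_fin: "finite A" and A_ne: "A \<noteq> {}"
    and kernel: "\<forall>a\<in>A. (\<lambda>s. p s a) \<in> M \<rightarrow>\<^sub>M prob_algebra M"
    and r_meas: "\<forall>a\<in>A. (\<lambda>s. r s a) \<in> borel_measurable M"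
    and r_bnd: "\<forall>s\<in>space M. \<forall>a\<in>A. 0 \<le> r s a \<and> r s a \<le> Rmax"
    and gamma: "0 \<le> \<gamma>" "\<gamma> < 1"
begin

definition bm :: "('s \<Rightarrow> real) \<Rightarrow> bool" where
  "bm f \<longleftrightarrow> f \<in> borel_measurable M \<and> (\<exists>B. \<forall>s\<in>space M. \<bar>f s\<bar> \<le> B)"

definition P :: "('s \<Rightarrow> 'a) \<Rightarrow> ('s \<Rightarrow> real) \<Rightarrow> 's \<Rightarrow> real" where
  "P \<mu> f s = (\<integral>t. f t \<partial>(p s (\<mu> s)))"

lemma const_policy: "a \<in> A \<Longrightarrow> (\<lambda>_. a) \<in> policies M A"
  unfolding policies_def by simp

lemma K_meas: assumes "\<mu> \<in> policies M A" shows "(\<lambda>s. p s (\<mu> s)) \<in> M \<rightarrow>\<^sub>M prob_algebra M"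
  using assms unfolding policies_def
  by (intro measurable_compose_countable'[where f="\<lambda>a s. p s a" and g=\<mu> and I=A])
     (use kernel A_fin in \<open>simp_all add: countable_finite\<close>)

lemma K_space: assumes "\<mu> \<in> policies M A" "s \<in> space M"
  shows "prob_space (p s (\<mu> s))" "sets (p s (\<mu> s)) = sets M" "space (p s (\<mu> s)) = space M"
proof -
  have "p s (\<mu> s) \<in> space (prob_algebra M)" using measurable_space[OF K_meas[OF assms(1)] assms(2)] .
  then show "prob_space (p s (\<mu> s))" "sets (p s (\<mu> s)) = sets M" by (simp_all add: space_prob_algebra)
  then show "space (p s (\<mu> s)) = space M" by (intro sets_eq_imp_space_eq)
qed

lemma pol_space: "\<mu> \<in> policies M A \<Longrightarrow> s \<in> space M \<Longrightarrow> \<mu> s \<in> A"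
  using measurable_space[of \<mu> M "count_space A" s] unfolding policies_def by simp

lemma bmD: assumes "bm f" obtains B where "f \<in> borel_measurable M" "\<forall>s\<in>space M. \<bar>f s\<bar> \<le> B"
  using assms unfolding bm_def by blast

lemma prob_integrable: assumes "prob_space N" "sets N = sets M" "bm f" shows "integrable N f"
proof -
  interpret prob_space N by fact
  obtain B where f: "f \<in> borel_measurable M" "\<forall>s\<in>space M. \<bar>f s\<bar> \<le> B" using bmD[OF assms(3)] .
  have sp: "space N = space M" using assms(2) by (rule sets_eq_imp_space_eq)
  have fm: "f \<in> borel_measurable N" by (subst measurable_cong_sets[OF assms(2) refl]) (rule f(1))
  show ?thesis
    by (rule integrable_const_bound[where B=B]) (use f sp fm in auto)
qed

lemma prob_bound: assumes "prob_space N" "sets N = sets M" "bm f" "\<forall>s\<in>space M. \<bar>f s\<bar> \<le> B"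
  shows "\<bar>\<integral>t. f t \<partial>N\<bar> \<le> B"
proof -
  interpret prob_space N by fact
  have sp: "space N = space M" using assms(2) by (rule sets_eq_imp_space_eq)
  have "\<bar>\<integral>t. f t \<partial>N\<bar> \<le> (\<integral>t. \<bar>f t\<bar> \<partial>N)" by (rule integral_abs_bound)
  also have "\<dots> \<le> (\<integral>t. B \<partial>N)"
    by (rule integral_mono) (use prob_integrable[OF assms(1,2,3)] assms(4) sp in auto)
  also have "\<dots> = B" by (simp add: prob_space)
  finally show ?thesis .
qed

lemma prob_mono: assumes "prob_space N" "sets N = sets M" "bm f" "bm g" "\<forall>s\<in>space M. f s \<le> g s"
  shows "(\<integral>t. f t \<partial>N) \<le> (\<integral>t. g t \<partial>N)"
proof -
  have sp: "space N = space M" using assms(2) by (rule sets_eq_imp_space_eq)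
  show ?thesis
    by (rule integral_mono) (use prob_integrable[OF assms(1,2,3)] prob_integrable[OF assms(1,2,4)] assms(5) sp in auto)
qed

lemma bm_add: assumes "bm f" "bm g" shows "bm (\<lambda>s. f s + g s)"
proof -
  obtain B where f: "f \<in> borel_measurable M" "\<forall>s\<in>space M. \<bar>f s\<bar> \<le> B" using bmD[OF assms(1)] .
  obtain C where g: "g \<in> borel_measurable M" "\<forall>s\<in>space M. \<bar>g s\<bar> \<le> C" using bmD[OF assms(2)] .
  have "\<forall>s\<in>space M. \<bar>f s + g s\<bar> \<le> B + C"
  proof
    fix s assume "s \<in> space M" then have "\<bar>f s\<bar> \<le> B" "\<bar>g s\<bar> \<le> C" using f g by auto
    then show "\<bar>f s + g s\<bar> \<le> B + C" using abs_triangle_ineq[of "f s" "g s"] by linarith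
  qed
  moreover have "(\<lambda>s. f s + g s) \<in> borel_measurable M" by (intro borel_measurable_add f(1) g(1))
  ultimately show ?thesis unfolding bm_def by blast
qed

lemma bm_cmult: assumes "bm f" shows "bm (\<lambda>s. c * f s)"
proof -
  obtain B where f: "f \<in> borel_measurable M" "\<forall>s\<in>space M. \<bar>f s\<bar> \<le> B" using bmD[OF assms(1)] .
  have "\<forall>s\<in>space M. \<bar>c * f s\<bar> \<le> \<bar>c\<bar> * B"
    using f(2) by (simp add: abs_mult mult_left_mono)
  moreover have "(\<lambda>s. c * f s) \<in> borel_measurable M" by (intro borel_measurable_times borel_measurable_const f(1))
  ultimately show ?thesis unfolding bm_def by blast
qed

lemma bm_diff: assumes "bm f" "bm g" shows "bm (\<lambda>s. f s - g s)"
  using bm_add[OF assms(1) bm_cmult[OF assms(2), of "-1"]] by simp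

lemma bm_abs: "bm f \<Longrightarrow> bm (\<lambda>s. \<bar>f s\<bar>)"
  unfolding bm_def by auto

lemma bm_const: "bm (\<lambda>s. c)"
  unfolding bm_def by auto

lemma P_meas: assumes "\<mu> \<in> policies M A" "f \<in> borel_measurable M" shows "P \<mu> f \<in> borel_measurable M"
  unfolding P_def
  using measurable_compose[OF measurable_prob_algebraD[OF K_meas[OF assms(1)]] integral_measurable_subprob_algebra[OF assms(2)]] .

lemma bm_P: assumes "\<mu> \<in> policies M A" "bm f" shows "bm (P \<mu> f)"
proof -
  obtain B where f: "f \<in> borel_measurable M" "\<forall>s\<in>space M. \<bar>f s\<bar> \<le> B" using bmD[OF assms(2)] .
  have "\<forall>s\<in>space M. \<bar>P \<mu> f s\<bar> \<le> B"
    unfolding P_def using prob_bound[OF K_space(1,2)[OF assms(1)] assms(2) f(2)] by blast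
  then show ?thesis unfolding bm_def using P_meas[OF assms(1) f(1)] by blast
qed

lemma P_mono: assumes "\<mu> \<in> policies M A" "s \<in> space M" "bm f" "bm g" "\<forall>s\<in>space M. f s \<le> g s"
  shows "P \<mu> f s \<le> P \<mu> g s"
  unfolding P_def by (rule prob_mono[OF K_space(1,2)[OF assms(1,2)] assms(3-5)])

lemma P_cmult: "P \<mu> (\<lambda>t. c * f t) s = c * P \<mu> f s"
  unfolding P_def by simp

lemma P_diff: assumes "\<mu> \<in> policies M A" "s \<in> space M" "bm f" "bm g"
  shows "P \<mu> (\<lambda>t. f t - g t) s = P \<mu> f s - P \<mu> g s"
  unfolding P_def
  by (rule Bochner_Integration.integral_diff[OF prob_integrable[OF K_space(1,2)[OF assms(1,2)] assms(3)] prob_integrable[OF K_space(1,2)[OF assms(1,2)] assms(4)]])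

lemma P_abs: assumes "\<mu> \<in> policies M A" "s \<in> space M" "bm f"
  shows "\<bar>P \<mu> f s\<bar> \<le> P \<mu> (\<lambda>t. \<bar>f t\<bar>) s"
  unfolding P_def by (rule integral_abs_bound)

lemma Tpol_eq: "Tpol p r \<gamma> \<mu> f = (\<lambda>s. r s (\<mu> s) + \<gamma> * P \<mu> f s)"
  unfolding Tpol_def P_def by simp

lemma rpol_bm: assumes "\<mu> \<in> policies M A" shows "bm (\<lambda>s. r s (\<mu> s))"
proof -
  have "(\<lambda>s. r s (\<mu> s)) \<in> borel_measurable M"
    using assms unfolding policies_def
    by (intro measurable_compose_countable'[where f="\<lambda>a s. r s a" and g=\<mu> and I=A])
       (use r_meas A_fin in \<open>simp_all add: countable_finite\<close>)
  moreover have "\<forall>s\<in>space M. \<bar>r s (\<mu> s)\<bar> \<le> Rmax"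
    using r_bnd pol_space[OF assms] by fastforce
  ultimately show ?thesis unfolding bm_def by blast
qed

lemma bm_Tpol: "\<mu> \<in> policies M A \<Longrightarrow> bm f \<Longrightarrow> bm (Tpol p r \<gamma> \<mu> f)"
  unfolding Tpol_eq by (intro bm_add rpol_bm bm_cmult bm_P)

lemma bm_Tpol_iter: "\<mu> \<in> policies M A \<Longrightarrow> bm f \<Longrightarrow> bm ((Tpol p r \<gamma> \<mu> ^^ n) f)"
  by (induction n) (auto intro: bm_Tpol)


definition Q :: "('s \<Rightarrow> real) \<Rightarrow> 'a \<Rightarrow> 's \<Rightarrow> real" where
  "Q f a s = r s a + \<gamma> * P (\<lambda>_. a) f s"

lemma Topt_eq: "Topt A p r \<gamma> f s = Max ((\<lambda>a. Q f a s) ` A)"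
  unfolding Topt_def Q_def P_def by simp

lemma Q_bm: assumes "a \<in> A" "bm f" shows "bm (Q f a)"
proof -
  have "Q f a = (\<lambda>s. r s ((\<lambda>_. a) s) + \<gamma> * P (\<lambda>_. a) f s)" by (simp add: Q_def fun_eq_iff)
  then show ?thesis
    using bm_add[OF rpol_bm[OF const_policy[OF assms(1)]] bm_cmult[OF bm_P[OF const_policy[OF assms(1)] assms(2)]]]
    by simp
qed

lemma bm_Topt: assumes "bm f" shows "bm (Topt A p r \<gamma> f)"
proof -
  have qm: "\<forall>a\<in>A. Q f a \<in> borel_measurable M" using Q_bm[OF _ assms] unfolding bm_def by blast
  obtain \<mu> where mu: "\<mu> \<in> M \<rightarrow>\<^sub>M count_space A" and le: "\<forall>s\<in>space M. \<forall>a\<in>A. Q f a s \<le> Q f (\<mu> s) s"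
    using selector[OF A_fin A_ne qm] by blast
  have muA: "\<mu> s \<in> A" if "s \<in> space M" for s
    using pol_space[of \<mu> s] mu that unfolding policies_def by blast
  have eq: "Topt A p r \<gamma> f s = Q f (\<mu> s) s" if s: "s \<in> space M" for s
    unfolding Topt_eq
    by (rule Max_eqI) (use A_fin le s muA[OF s] in auto)
  have m: "(\<lambda>s. Q f (\<mu> s) s) \<in> borel_measurable M"
    by (rule measurable_compose_countable'[OF _ mu]) (use qm A_fin in \<open>simp_all add: countable_finite\<close>)
  have m2: "Topt A p r \<gamma> f \<in> borel_measurable M"
    using m by (subst measurable_cong[OF eq]) auto
  obtain B where f: "f \<in> borel_measurable M" "\<forall>s\<in>space M. \<bar>f s\<bar> \<le> B" using bmD[OF assms] .
  have bnd: "\<bar>Topt A p r \<gamma> f s\<bar> \<le> \<bar>Rmax\<bar> + \<gamma> * B" if s: "s \<in> space M" for s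
  proof -
    have a: "\<mu> s \<in> A" by (rule muA[OF s])
    have pb: "\<bar>P (\<lambda>_. \<mu> s) f s\<bar> \<le> B"
      unfolding P_def using prob_bound[OF K_space(1,2)[OF const_policy[OF a] s] assms f(2)] by simp
    have rb: "\<bar>r s (\<mu> s)\<bar> \<le> \<bar>Rmax\<bar>" using r_bnd s a by fastforce
    have "\<bar>\<gamma> * P (\<lambda>_. \<mu> s) f s\<bar> \<le> \<gamma> * B"
      using pb gamma(1) by (simp add: abs_mult mult_left_mono)
    then show ?thesis unfolding eq[OF s] Q_def using rb abs_triangle_ineq[of "r s (\<mu> s)" "\<gamma> * P (\<lambda>_. \<mu> s) f s"] by linarith
  qed
  show ?thesis unfolding bm_def using m2 bnd by blast
qed

lemma bm_Topt_iter: "bm f \<Longrightarrow> bm ((Topt A p r \<gamma> ^^ n) f)"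
  by (induction n) (auto intro: bm_Topt)

lemma Topt_le: assumes "bm f" "bm g" "s \<in> space M"
  shows "\<exists>a\<in>A. Topt A p r \<gamma> f s - Topt A p r \<gamma> g s \<le> \<gamma> * P (\<lambda>_. a) (\<lambda>t. \<bar>f t - g t\<bar>) s"
proof -
  have "Max ((\<lambda>a. Q f a s) ` A) \<in> (\<lambda>a. Q f a s) ` A" by (rule Max_in) (use A_fin A_ne in auto)
  then obtain a where a: "a \<in> A" and ea: "Topt A p r \<gamma> f s = Q f a s" unfolding Topt_eq by auto
  have ga: "Q g a s \<le> Topt A p r \<gamma> g s" unfolding Topt_eq by (rule Max_ge) (use A_fin a in auto)
  have pa: "a \<in> A \<Longrightarrow> (\<lambda>_. a) \<in> policies M A" by (rule const_policy)
  have "P (\<lambda>_. a) f s - P (\<lambda>_. a) g s = P (\<lambda>_. a) (\<lambda>t. f t - g t) s"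
    by (rule P_diff[OF pa[OF a] assms(3,1,2), symmetric])
  also have "\<dots> \<le> P (\<lambda>_. a) (\<lambda>t. \<bar>f t - g t\<bar>) s"
    by (rule P_mono[OF pa[OF a] assms(3)]) (use bm_abs[OF bm_diff[OF assms(1,2)]] bm_diff[OF assms(1,2)] in auto)
  finally have "\<gamma> * (P (\<lambda>_. a) f s - P (\<lambda>_. a) g s) \<le> \<gamma> * P (\<lambda>_. a) (\<lambda>t. \<bar>f t - g t\<bar>) s"
    using gamma(1) by (rule mult_left_mono)
  then have "Q f a s - Q g a s \<le> \<gamma> * P (\<lambda>_. a) (\<lambda>t. \<bar>f t - g t\<bar>) s"
    unfolding Q_def by (simp add: algebra_simps)
  then have "Topt A p r \<gamma> f s - Topt A p r \<gamma> g s \<le> \<gamma> * P (\<lambda>_. a) (\<lambda>t. \<bar>f t - g t\<bar>) s"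
    using ea ga by linarith
  then show ?thesis using a by blast
qed

lemma Topt_diff: assumes "bm f" "bm g"
  shows "\<exists>\<mu>\<in>policies M A. \<forall>s\<in>space M.
     \<bar>Topt A p r \<gamma> f s - Topt A p r \<gamma> g s\<bar> \<le> \<gamma> * P \<mu> (\<lambda>t. \<bar>f t - g t\<bar>) s"
proof -
  define D where "D = (\<lambda>t. \<bar>f t - g t\<bar>)"
  have D': "(\<lambda>t. \<bar>g t - f t\<bar>) = D" unfolding D_def by (simp add: abs_minus_commute)
  have bD: "bm D" unfolding D_def by (intro bm_abs bm_diff assms)
  have qm: "\<forall>a\<in>A. P (\<lambda>_. a) D \<in> borel_measurable M"
    using bm_P[OF const_policy bD] unfolding bm_def by blast
  obtain \<mu> where mu: "\<mu> \<in> M \<rightarrow>\<^sub>M count_space A" and le: "\<forall>s\<in>space M. \<forall>a\<in>A. P (\<lambda>_. a) D s \<le> P (\<lambda>_. \<mu> s) D s"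
    using selector[OF A_fin A_ne qm] by blast
  have pol: "\<mu> \<in> policies M A" using mu unfolding policies_def .
  have eqP: "P (\<lambda>_. \<mu> s) D s = P \<mu> D s" for s unfolding P_def by simp
  have "\<bar>Topt A p r \<gamma> f s - Topt A p r \<gamma> g s\<bar> \<le> \<gamma> * P \<mu> D s" if s: "s \<in> space M" for s
  proof -
    obtain a1 where a1: "a1 \<in> A" "Topt A p r \<gamma> f s - Topt A p r \<gamma> g s \<le> \<gamma> * P (\<lambda>_. a1) D s"
      using Topt_le[OF assms s] unfolding D_def by blast
    obtain a2 where a2: "a2 \<in> A" "Topt A p r \<gamma> g s - Topt A p r \<gamma> f s \<le> \<gamma> * P (\<lambda>_. a2) D s"
      using Topt_le[OF assms(2,1) s] unfolding D' by blast
    have "\<gamma> * P (\<lambda>_. a1) D s \<le> \<gamma> * P \<mu> D s"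
      using le s a1(1) gamma(1) eqP by (metis mult_left_mono)
    moreover have "\<gamma> * P (\<lambda>_. a2) D s \<le> \<gamma> * P \<mu> D s"
      using le s a2(1) gamma(1) eqP by (metis mult_left_mono)
    ultimately show ?thesis using a1(2) a2(2) by linarith
  qed
  then show ?thesis using pol unfolding D_def by blast
qed

primrec G :: "('s \<Rightarrow> 'a) list \<Rightarrow> ('s \<Rightarrow> real) \<Rightarrow> 's \<Rightarrow> real" where
  "G [] f = f"
| "G (\<mu> # \<mu>s) f = P \<mu> (G \<mu>s f)"

lemma bm_G: "set \<mu>s \<subseteq> policies M A \<Longrightarrow> bm f \<Longrightarrow> bm (G \<mu>s f)"
  by (induction \<mu>s) (auto intro: bm_P)

lemma G_mono: "set \<mu>s \<subseteq> policies M A \<Longrightarrow> bm f \<Longrightarrow> bm g \<Longrightarrow> \<forall>s\<in>space M. f s \<le> g s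
  \<Longrightarrow> \<forall>s\<in>space M. G \<mu>s f s \<le> G \<mu>s g s"
proof (induction \<mu>s)
  case Nil then show ?case by simp
next
  case (Cons \<mu> \<mu>s)
  then have pm: "\<mu> \<in> policies M A" and ps: "set \<mu>s \<subseteq> policies M A" by auto
  show ?case
  proof
    fix s assume s: "s \<in> space M"
    show "G (\<mu> # \<mu>s) f s \<le> G (\<mu> # \<mu>s) g s"
      unfolding G.simps
      by (rule P_mono[OF pm s bm_G[OF ps Cons.prems(2)] bm_G[OF ps Cons.prems(3)]])
         (use Cons ps in blast)
  qed
qed

lemma G_cmult: "G \<mu>s (\<lambda>t. c * f t) = (\<lambda>s. c * G \<mu>s f s)"
  by (induction \<mu>s) (simp_all add: P_cmult)

lemma G_append: "G (\<mu>s @ \<nu>s) f = G \<mu>s (G \<nu>s f)"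
  by (induction \<mu>s) simp_all

lemma Topt_iter_diff: assumes "bm f" "bm g"
  shows "\<exists>\<mu>s. length \<mu>s = d \<and> set \<mu>s \<subseteq> policies M A \<and>
    (\<forall>s\<in>space M. \<bar>(Topt A p r \<gamma> ^^ d) f s - (Topt A p r \<gamma> ^^ d) g s\<bar> \<le> \<gamma> ^ d * G \<mu>s (\<lambda>t. \<bar>f t - g t\<bar>) s)"
proof (induction d)
  case 0 show ?case by (intro exI[of _ "[]"]) simp
next
  case (Suc d)
  define D where "D = (\<lambda>t. \<bar>f t - g t\<bar>)"
  have bD: "bm D" unfolding D_def by (intro bm_abs bm_diff assms)
  from Suc obtain \<mu>s where l: "length \<mu>s = d" and p\<mu>s: "set \<mu>s \<subseteq> policies M A"
    and le: "\<forall>s\<in>space M. \<bar>(Topt A p r \<gamma> ^^ d) f s - (Topt A p r \<gamma> ^^ d) g s\<bar> \<le> \<gamma> ^ d * G \<mu>s D s"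
    unfolding D_def by blast
  define F where "F = (Topt A p r \<gamma> ^^ d) f"
  define H where "H = (Topt A p r \<gamma> ^^ d) g"
  have bF: "bm F" "bm H" unfolding F_def H_def by (intro bm_Topt_iter assms)+
  obtain \<mu> where p\<mu>: "\<mu> \<in> policies M A"
    and st: "\<forall>s\<in>space M. \<bar>Topt A p r \<gamma> F s - Topt A p r \<gamma> H s\<bar> \<le> \<gamma> * P \<mu> (\<lambda>t. \<bar>F t - H t\<bar>) s"
    using Topt_diff[OF bF] by blast
  have "\<bar>(Topt A p r \<gamma> ^^ Suc d) f s - (Topt A p r \<gamma> ^^ Suc d) g s\<bar> \<le> \<gamma> ^ Suc d * G (\<mu> # \<mu>s) D s"
    if s: "s \<in> space M" for s
  proof -
    have "\<bar>(Topt A p r \<gamma> ^^ Suc d) f s - (Topt A p r \<gamma> ^^ Suc d) g s\<bar> = \<bar>Topt A p r \<gamma> F s - Topt A p r \<gamma> H s\<bar>"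
      unfolding F_def H_def by simp
    also have "\<dots> \<le> \<gamma> * P \<mu> (\<lambda>t. \<bar>F t - H t\<bar>) s" using st s by blast
    also have "\<dots> \<le> \<gamma> * P \<mu> (\<lambda>t. \<gamma> ^ d * G \<mu>s D t) s"
      by (intro mult_left_mono[OF _ gamma(1)] P_mono[OF p\<mu> s])
         (use bF bD bm_G[OF p\<mu>s bD] le in \<open>auto simp: F_def H_def intro: bm_abs bm_diff bm_cmult\<close>)
    also have "\<dots> = \<gamma> ^ Suc d * G (\<mu> # \<mu>s) D s" by (simp add: P_cmult)
    finally show ?thesis .
  qed
  then show ?case using l p\<mu>s p\<mu> unfolding D_def by (intro exI[of _ "\<mu> # \<mu>s"]) auto
qed


lemma sd_meas: assumes "\<pi> \<in> policies M A"
  shows "(\<lambda>s. state_dist M p \<pi> s t) \<in> M \<rightarrow>\<^sub>M prob_algebra M"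
proof (induction t)
  case 0
  have "(\<lambda>s. state_dist M p \<pi> s 0) = return M" by (simp add: state_dist_def fun_eq_iff)
  then show ?case using measurable_return_prob_space[of M] by simp
next
  case (Suc t)
  have "(\<lambda>s. state_dist M p \<pi> s (Suc t)) = (\<lambda>s. state_dist M p \<pi> s t \<bind> (\<lambda>y. p y (\<pi> y)))"
    unfolding state_dist_def push_def by simp
  then show ?case using measurable_bind_prob_space[OF Suc K_meas[OF assms]] by simp
qed

lemma sd_space: assumes "\<pi> \<in> policies M A" "s \<in> space M"
  shows "prob_space (state_dist M p \<pi> s t)" "sets (state_dist M p \<pi> s t) = sets M"
proof -
  have "state_dist M p \<pi> s t \<in> space (prob_algebra M)" using measurable_space[OF sd_meas[OF assms(1)] assms(2)] .
  then show "prob_space (state_dist M p \<pi> s t)" "sets (state_dist M p \<pi> s t) = sets M" by (simp_all add: space_prob_algebra)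
qed

lemma sd_meas_K: assumes "\<pi> \<in> policies M A" "\<mu> \<in> policies M A" "s \<in> space M"
  shows "(\<lambda>y. state_dist M p \<pi> y t) \<in> p s (\<mu> s) \<rightarrow>\<^sub>M subprob_algebra M"
  using measurable_prob_algebraD[OF sd_meas[OF assms(1)]]
  by (subst measurable_cong_sets[OF K_space(2)[OF assms(2,3)] refl])

lemma sd_Suc: assumes "\<pi> \<in> policies M A" "s \<in> space M"
  shows "state_dist M p \<pi> s (Suc t) = p s (\<pi> s) \<bind> (\<lambda>y. state_dist M p \<pi> y t)"
proof (induction t)
  case 0
  have e0: "(\<lambda>y. state_dist M p \<pi> y 0) = return M" by (simp add: state_dist_def fun_eq_iff)
  have "state_dist M p \<pi> s (Suc 0) = return M s \<bind> (\<lambda>y. p y (\<pi> y))" unfolding state_dist_def push_def by simp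
  also have "\<dots> = p s (\<pi> s)" by (rule bind_return[OF measurable_prob_algebraD[OF K_meas[OF assms(1)]] assms(2)])
  also have "\<dots> = p s (\<pi> s) \<bind> return M" by (rule bind_return''[symmetric]) (rule K_space(2)[OF assms])
  finally show ?case unfolding e0 .
next
  case (Suc t)
  have "state_dist M p \<pi> s (Suc (Suc t)) = state_dist M p \<pi> s (Suc t) \<bind> (\<lambda>y. p y (\<pi> y))"
    unfolding state_dist_def push_def by simp
  also have "\<dots> = (p s (\<pi> s) \<bind> (\<lambda>y. state_dist M p \<pi> y t)) \<bind> (\<lambda>y. p y (\<pi> y))" using Suc by simp
  also have "\<dots> = p s (\<pi> s) \<bind> (\<lambda>x. state_dist M p \<pi> x t \<bind> (\<lambda>y. p y (\<pi> y)))"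
    by (rule bind_assoc[OF sd_meas_K[OF assms(1,1,2)] measurable_prob_algebraD[OF K_meas[OF assms(1)]]])
  also have "\<dots> = p s (\<pi> s) \<bind> (\<lambda>y. state_dist M p \<pi> y (Suc t))" unfolding state_dist_def push_def by simp
  finally show ?case .
qed

definition E :: "('s \<Rightarrow> 'a) \<Rightarrow> nat \<Rightarrow> 's \<Rightarrow> real" where
  "E \<pi> t s = (\<integral>x. r x (\<pi> x) \<partial>(state_dist M p \<pi> s t))"

lemma Vpol_E: "Vpol M p r \<gamma> \<pi> s = (\<Sum>t. \<gamma> ^ t * E \<pi> t s)"
  unfolding Vpol_def E_def by simp

lemma rpol_bnd: "\<pi> \<in> policies M A \<Longrightarrow> \<forall>s\<in>space M. \<bar>r s (\<pi> s)\<bar> \<le> Rmax"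
  using r_bnd pol_space by fastforce

lemma bm_E: assumes "\<pi> \<in> policies M A" shows "bm (E \<pi> t)" "\<forall>s\<in>space M. \<bar>E \<pi> t s\<bar> \<le> Rmax"
proof -
  have rm: "(\<lambda>s. r s (\<pi> s)) \<in> borel_measurable M" using rpol_bm[OF assms] unfolding bm_def by blast
  have m: "E \<pi> t \<in> borel_measurable M"
    unfolding E_def[abs_def]
    using measurable_compose[OF measurable_prob_algebraD[OF sd_meas[OF assms]] integral_measurable_subprob_algebra[OF rm]] .
  show b: "\<forall>s\<in>space M. \<bar>E \<pi> t s\<bar> \<le> Rmax"
    unfolding E_def using prob_bound[OF sd_space[OF assms] rpol_bm[OF assms] rpol_bnd[OF assms]] by blast
  show "bm (E \<pi> t)" unfolding bm_def using m b by blast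
qed

lemma E_0: assumes "\<pi> \<in> policies M A" "s \<in> space M" shows "E \<pi> 0 s = r s (\<pi> s)"
proof -
  have rm: "(\<lambda>s. r s (\<pi> s)) \<in> borel_measurable M" using rpol_bm[OF assms(1)] unfolding bm_def by blast
  show ?thesis unfolding E_def state_dist_def using integral_return[OF assms(2) rm] by simp
qed

lemma E_Suc: assumes "\<pi> \<in> policies M A" "s \<in> space M"
  shows "E \<pi> (Suc t) s = (\<integral>y. E \<pi> t y \<partial>(p s (\<pi> s)))"
proof -
  have rm: "(\<lambda>s. r s (\<pi> s)) \<in> borel_measurable M" using rpol_bm[OF assms(1)] unfolding bm_def by blast
  have fin: "finite_measure (p s (\<pi> s))" using K_space(1)[OF assms(1,2)] unfolding prob_space_def by blast
  have ae: "AE x in p s (\<pi> s). emeasure (state_dist M p \<pi> x t) (space (state_dist M p \<pi> x t)) \<le> ennreal 1"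
  proof (rule AE_I2)
    fix x assume "x \<in> space (p s (\<pi> s))"
    then have x: "x \<in> space M" using K_space(3)[OF assms(1,2)] by simp
    show "emeasure (state_dist M p \<pi> x t) (space (state_dist M p \<pi> x t)) \<le> ennreal 1"
      using prob_space.emeasure_space_1[OF sd_space(1)[OF assms(1) x]] by simp
  qed
  have "E \<pi> (Suc t) s = (\<integral>x. r x (\<pi> x) \<partial>(p s (\<pi> s) \<bind> (\<lambda>y. state_dist M p \<pi> y t)))"
    unfolding E_def sd_Suc[OF assms] ..
  also have "\<dots> = (\<integral>y. (\<integral>x. r x (\<pi> x) \<partial>(state_dist M p \<pi> y t)) \<partial>(p s (\<pi> s)))"
    by (rule integral_bind[OF rm _ sd_meas_K[OF assms(1,1,2)] fin ae]) (use rpol_bnd[OF assms(1)] in blast)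
  finally show ?thesis unfolding E_def .
qed

lemma geo_summable: "summable (\<lambda>t. \<gamma> ^ t * Rmax)"
  by (rule summable_mult2) (rule summable_geometric, use gamma in simp)

lemma E_summable: assumes "\<pi> \<in> policies M A" "s \<in> space M"
  shows "summable (\<lambda>t. \<gamma> ^ t * E \<pi> t s)" "\<And>t. norm (\<gamma> ^ t * E \<pi> t s) \<le> \<gamma> ^ t * Rmax"
proof -
  show n: "norm (\<gamma> ^ t * E \<pi> t s) \<le> \<gamma> ^ t * Rmax" for t
    using bm_E(2)[OF assms(1), of t] assms(2) gamma(1) by (simp add: abs_mult mult_left_mono)
  show "summable (\<lambda>t. \<gamma> ^ t * E \<pi> t s)"
    by (rule summable_comparison_test'[OF geo_summable n])
qed

lemma E_summable_norm: assumes "\<pi> \<in> policies M A" "s \<in> space M"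
  shows "summable (\<lambda>t. norm (\<gamma> ^ t * E \<pi> t s))"
  by (rule summable_comparison_test'[OF geo_summable]) (use E_summable(2)[OF assms] in simp)

lemma bm_Vpol: assumes "\<pi> \<in> policies M A" shows "bm (Vpol M p r \<gamma> \<pi>)"
proof -
  have m: "Vpol M p r \<gamma> \<pi> \<in> borel_measurable M"
  proof (rule borel_measurable_LIMSEQ_real[where u="\<lambda>i s. \<Sum>t<i. \<gamma> ^ t * E \<pi> t s"])
    fix s assume "s \<in> space M"
    then show "(\<lambda>i. \<Sum>t<i. \<gamma> ^ t * E \<pi> t s) \<longlonglongrightarrow> Vpol M p r \<gamma> \<pi> s"
      unfolding Vpol_E using summable_LIMSEQ[OF E_summable(1)[OF assms]] by blast
  next
    fix i show "(\<lambda>s. \<Sum>t<i. \<gamma> ^ t * E \<pi> t s) \<in> borel_measurable M"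
      using bm_E(1)[OF assms] unfolding bm_def by (intro borel_measurable_sum borel_measurable_times borel_measurable_const) blast
  qed
  have b: "\<bar>Vpol M p r \<gamma> \<pi> s\<bar> \<le> (\<Sum>t. \<gamma> ^ t * Rmax)" if s: "s \<in> space M" for s
  proof -
    have "\<bar>Vpol M p r \<gamma> \<pi> s\<bar> \<le> (\<Sum>t. norm (\<gamma> ^ t * E \<pi> t s))"
      unfolding Vpol_E
      using summable_norm[OF E_summable_norm[OF assms s]] by simp
    also have "\<dots> \<le> (\<Sum>t. \<gamma> ^ t * Rmax)"
      by (rule suminf_le[OF E_summable(2)[OF assms s] E_summable_norm[OF assms s] geo_summable])
    finally show ?thesis .
  qed
  show ?thesis unfolding bm_def using m b by blast
qed

lemma Vpol_fix: assumes "\<pi> \<in> policies M A" "s \<in> space M"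
  shows "Vpol M p r \<gamma> \<pi> s = r s (\<pi> s) + \<gamma> * P \<pi> (Vpol M p r \<gamma> \<pi>) s"
proof -
  let ?N = "p s (\<pi> s)"
  let ?f = "\<lambda>t. \<gamma> ^ t * E \<pi> t s"
  have ps: "prob_space ?N" "sets ?N = sets M" "space ?N = space M" using K_space[OF assms] by auto
  have sm: "summable ?f" by (rule E_summable(1)[OF assms])
  have int: "integrable ?N (\<lambda>y. \<gamma> ^ i * E \<pi> i y)" for i
    by (rule prob_integrable[OF ps(1,2) bm_cmult[OF bm_E(1)[OF assms(1)]]])
  have ae: "AE y in ?N. summable (\<lambda>i. norm (\<gamma> ^ i * E \<pi> i y))"
    by (rule AE_I2) (use ps(3) E_summable_norm[OF assms(1)] in auto)
  have si: "summable (\<lambda>i. \<integral>y. norm (\<gamma> ^ i * E \<pi> i y) \<partial>?N)"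
  proof (rule summable_comparison_test'[OF geo_summable])
    fix n
    have "\<bar>\<integral>y. norm (\<gamma> ^ n * E \<pi> n y) \<partial>?N\<bar> \<le> \<gamma> ^ n * Rmax"
      by (rule prob_bound[OF ps(1,2)]) (use E_summable(2)[OF assms(1)] bm_abs[OF bm_cmult[OF bm_E(1)[OF assms(1)]], of "\<gamma> ^ n" n] in auto)
    then show "norm (\<integral>y. norm (\<gamma> ^ n * E \<pi> n y) \<partial>?N) \<le> \<gamma> ^ n * Rmax" by simp
  qed
  have "Vpol M p r \<gamma> \<pi> s = (\<Sum>t. ?f (Suc t)) + ?f 0"
    unfolding Vpol_E using suminf_split_head[OF sm] by simp
  also have "?f 0 = r s (\<pi> s)" using E_0[OF assms] by simp
  also have "(\<Sum>t. ?f (Suc t)) = (\<Sum>t. \<gamma> * (\<integral>y. \<gamma> ^ t * E \<pi> t y \<partial>?N))"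
    by (simp add: E_Suc[OF assms] mult.assoc)
  also have "\<dots> = \<gamma> * (\<Sum>t. (\<integral>y. \<gamma> ^ t * E \<pi> t y \<partial>?N))"
    by (rule suminf_mult[OF summable_integral[OF int ae si]])
  also have "(\<Sum>t. (\<integral>y. \<gamma> ^ t * E \<pi> t y \<partial>?N)) = (\<integral>y. (\<Sum>t. \<gamma> ^ t * E \<pi> t y) \<partial>?N)"
    by (rule integral_suminf[OF int ae si, symmetric])
  also have "\<dots> = P \<pi> (Vpol M p r \<gamma> \<pi>) s" unfolding P_def Vpol_E ..
  finally show ?thesis by simp
qed


lemma Tpol_iter_diff: assumes pi: "\<pi> \<in> policies M A" and V: "bm V"
  shows "\<forall>s\<in>space M. \<bar>Vpol M p r \<gamma> \<pi> s - (Tpol p r \<gamma> \<pi> ^^ h) V s\<bar>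
           \<le> \<gamma> ^ h * G (replicate h \<pi>) (\<lambda>t. \<bar>Vpol M p r \<gamma> \<pi> t - V t\<bar>) s"
proof (induction h)
  case 0 show ?case by simp
next
  case (Suc h)
  define W where "W = Vpol M p r \<gamma> \<pi>"
  define J where "J = (Tpol p r \<gamma> \<pi> ^^ h) V"
  define D where "D = (\<lambda>t. \<bar>W t - V t\<bar>)"
  have bW: "bm W" unfolding W_def by (rule bm_Vpol[OF pi])
  have bJ: "bm J" unfolding J_def by (rule bm_Tpol_iter[OF pi V])
  have bD: "bm D" unfolding D_def by (intro bm_abs bm_diff bW V)
  have ps: "set (replicate h \<pi>) \<subseteq> policies M A" using pi by auto
  have IH: "\<forall>s\<in>space M. \<bar>W s - J s\<bar> \<le> \<gamma> ^ h * G (replicate h \<pi>) D s"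
    using Suc unfolding W_def J_def D_def .
  have "\<bar>W s - (Tpol p r \<gamma> \<pi> ^^ Suc h) V s\<bar> \<le> \<gamma> ^ Suc h * G (replicate (Suc h) \<pi>) D s"
    if s: "s \<in> space M" for s
  proof -
    have "W s - (Tpol p r \<gamma> \<pi> ^^ Suc h) V s = \<gamma> * (P \<pi> W s - P \<pi> J s)"
      using Vpol_fix[OF pi s] unfolding W_def J_def by (simp add: Tpol_eq algebra_simps)
    also have "\<dots> = \<gamma> * P \<pi> (\<lambda>t. W t - J t) s" by (simp add: P_diff[OF pi s bW bJ])
    finally have "\<bar>W s - (Tpol p r \<gamma> \<pi> ^^ Suc h) V s\<bar> = \<gamma> * \<bar>P \<pi> (\<lambda>t. W t - J t) s\<bar>"
      using gamma(1) by (simp add: abs_mult)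
    also have "\<dots> \<le> \<gamma> * P \<pi> (\<lambda>t. \<bar>W t - J t\<bar>) s"
      by (rule mult_left_mono[OF P_abs[OF pi s bm_diff[OF bW bJ]] gamma(1)])
    also have "\<dots> \<le> \<gamma> * P \<pi> (\<lambda>t. \<gamma> ^ h * G (replicate h \<pi>) D t) s"
      by (rule mult_left_mono[OF P_mono[OF pi s] gamma(1)])
         (use IH bm_abs[OF bm_diff[OF bW bJ]] bm_cmult[OF bm_G[OF ps bD]] in auto)
    also have "\<dots> = \<gamma> ^ Suc h * G (replicate (Suc h) \<pi>) D s" by (simp add: P_cmult)
    finally show ?thesis .
  qed
  then show ?case unfolding W_def D_def by blast
qed

lemma push_space: assumes "\<nu> \<in> space (prob_algebra M)" "\<mu> \<in> policies M A"
  shows "push p \<nu> \<mu> \<in> space (prob_algebra M)"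
  unfolding push_def space_prob_algebra
  using prob_space_bind'[OF assms(1) K_meas[OF assms(2)]] sets_bind'[OF assms(1) K_meas[OF assms(2)]] by simp

lemma push_list_space: "\<nu> \<in> space (prob_algebra M) \<Longrightarrow> set \<mu>s \<subseteq> policies M A
  \<Longrightarrow> push_list p \<nu> \<mu>s \<in> space (prob_algebra M)"
proof (induction \<mu>s arbitrary: \<nu>)
  case Nil then show ?case by (simp add: push_list_def)
next
  case (Cons \<mu> \<mu>s)
  have "push_list p \<nu> (\<mu> # \<mu>s) = push_list p (push p \<nu> \<mu>) \<mu>s" by (simp add: push_list_def)
  then show ?case using Cons.IH[OF push_space[OF Cons.prems(1)]] Cons.prems by simp
qed

lemma P_int: assumes nu: "\<nu> \<in> space (prob_algebra M)" and mu: "\<mu> \<in> policies M A" and f: "bm f"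
  shows "(\<integral>s. P \<mu> f s \<partial>\<nu>) = (\<integral>t. f t \<partial>(push p \<nu> \<mu>))"
proof -
  obtain B where fb: "f \<in> borel_measurable M" "\<forall>s\<in>space M. \<bar>f s\<bar> \<le> B" using bmD[OF f] .
  have ns: "prob_space \<nu>" "sets \<nu> = sets M" using nu by (auto simp: space_prob_algebra)
  have sp: "space \<nu> = space M" using ns(2) by (rule sets_eq_imp_space_eq)
  have Km: "(\<lambda>s. p s (\<mu> s)) \<in> \<nu> \<rightarrow>\<^sub>M subprob_algebra M"
    using measurable_prob_algebraD[OF K_meas[OF mu]] by (subst measurable_cong_sets[OF ns(2) refl])
  have fin: "finite_measure \<nu>" using ns(1) unfolding prob_space_def by blast
  have ae: "AE x in \<nu>. emeasure (p x (\<mu> x)) (space (p x (\<mu> x))) \<le> ennreal 1"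
  proof (rule AE_I2)
    fix x assume "x \<in> space \<nu>"
    then have x: "x \<in> space M" using sp by simp
    show "emeasure (p x (\<mu> x)) (space (p x (\<mu> x))) \<le> ennreal 1"
      using prob_space.emeasure_space_1[OF K_space(1)[OF mu x]] by simp
  qed
  show ?thesis unfolding push_def P_def
    by (rule integral_bind[OF fb(1) _ Km fin ae, symmetric]) (use fb(2) in blast)
qed

lemma G_int: "\<nu> \<in> space (prob_algebra M) \<Longrightarrow> set \<mu>s \<subseteq> policies M A \<Longrightarrow> bm f
  \<Longrightarrow> (\<integral>s. G \<mu>s f s \<partial>\<nu>) = (\<integral>t. f t \<partial>(push_list p \<nu> \<mu>s))"
proof (induction \<mu>s arbitrary: \<nu>)
  case Nil then show ?case by (simp add: push_list_def)
next
  case (Cons \<mu> \<mu>s)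
  have ps: "set \<mu>s \<subseteq> policies M A" and pm: "\<mu> \<in> policies M A" using Cons.prems by auto
  have "(\<integral>s. G (\<mu> # \<mu>s) f s \<partial>\<nu>) = (\<integral>t. G \<mu>s f t \<partial>(push p \<nu> \<mu>))"
    unfolding G.simps by (rule P_int[OF Cons.prems(1) pm bm_G[OF ps Cons.prems(3)]])
  also have "\<dots> = (\<integral>t. f t \<partial>(push_list p (push p \<nu> \<mu>) \<mu>s))"
    by (rule Cons.IH[OF push_space[OF Cons.prems(1) pm] ps Cons.prems(3)])
  also have "push_list p (push p \<nu> \<mu>) \<mu>s = push_list p \<nu> (\<mu> # \<mu>s)" by (simp add: push_list_def)
  finally show ?case .
qed

lemma conc_bound:
  assumes rho0: "\<rho>0 \<in> space (prob_algebra M)" and nu: "\<nu> \<in> space (prob_algebra M)"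
    and ac: "absolutely_continuous \<rho>0 \<nu>"
    and C: "esssup \<rho>0 (RN_deriv \<rho>0 \<nu>) \<le> C" "C < \<infinity>"
    and f: "bm f" "\<forall>s\<in>space M. 0 \<le> f s"
  shows "(\<integral>t. f t \<partial>\<nu>) \<le> enn2real C * (\<integral>t. f t \<partial>\<rho>0)"
proof -
  have r0: "prob_space \<rho>0" "sets \<rho>0 = sets M" using rho0 by (auto simp: space_prob_algebra)
  have n0: "prob_space \<nu>" "sets \<nu> = sets M" using nu by (auto simp: space_prob_algebra)
  interpret R: prob_space \<rho>0 by (rule r0(1))
  have sp0: "space \<rho>0 = space M" using r0(2) by (rule sets_eq_imp_space_eq)
  have spn: "space \<nu> = space M" using n0(2) by (rule sets_eq_imp_space_eq)
  obtain B where fb: "f \<in> borel_measurable M" "\<forall>s\<in>space M. \<bar>f s\<bar> \<le> B" using bmD[OF f(1)] .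
  have fm0: "f \<in> borel_measurable \<rho>0" by (subst measurable_cong_sets[OF r0(2) refl]) (rule fb(1))
  have fmn: "f \<in> borel_measurable \<nu>" by (subst measurable_cong_sets[OF n0(2) refl]) (rule fb(1))
  have "(\<integral>\<^sup>+x. ennreal (f x) \<partial>\<nu>) = (\<integral>\<^sup>+x. RN_deriv \<rho>0 \<nu> x * ennreal (f x) \<partial>\<rho>0)"
    by (rule R.RN_deriv_nn_integral[OF ac]) (use n0(2) r0(2) fm0 in auto)
  also have "\<dots> \<le> (\<integral>\<^sup>+x. C * ennreal (f x) \<partial>\<rho>0)"
  proof (rule nn_integral_mono_AE)
    show "AE x in \<rho>0. RN_deriv \<rho>0 \<nu> x * ennreal (f x) \<le> C * ennreal (f x)"
      using esssup_AE[where M=\<rho>0 and f="RN_deriv \<rho>0 \<nu>"]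
    proof eventually_elim
      case (elim x)
      then have "RN_deriv \<rho>0 \<nu> x \<le> C" using C(1) by (rule order_trans)
      then show ?case by (rule mult_right_mono) simp
    qed
  qed
  also have "\<dots> = C * (\<integral>\<^sup>+x. ennreal (f x) \<partial>\<rho>0)"
    by (rule nn_integral_cmult) (use fm0 in simp)
  finally have le: "(\<integral>\<^sup>+x. ennreal (f x) \<partial>\<nu>) \<le> C * (\<integral>\<^sup>+x. ennreal (f x) \<partial>\<rho>0)" .
  have i0: "(\<integral>\<^sup>+x. ennreal (f x) \<partial>\<rho>0) = ennreal (\<integral>x. f x \<partial>\<rho>0)"
    by (rule nn_integral_eq_integral[OF prob_integrable[OF r0 f(1)]]) (use f(2) sp0 in auto)
  have inn: "(\<integral>\<^sup>+x. ennreal (f x) \<partial>\<nu>) = ennreal (\<integral>x. f x \<partial>\<nu>)"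
    by (rule nn_integral_eq_integral[OF prob_integrable[OF n0 f(1)]]) (use f(2) spn in auto)
  have nn0: "0 \<le> (\<integral>x. f x \<partial>\<rho>0)" by (rule integral_nonneg_AE) (use f(2) sp0 in auto)
  have Ceq: "C = ennreal (enn2real C)" using C(2) by simp
  have "ennreal (\<integral>x. f x \<partial>\<nu>) \<le> ennreal (enn2real C * (\<integral>x. f x \<partial>\<rho>0))"
    using le unfolding i0 inn by (subst (asm) Ceq) (simp add: ennreal_mult' nn0)
  then show ?thesis using nn0 by (simp add: ennreal_le_iff)
qed

end
theorem mainTheorem4:
  fixes M :: "'s measure" and A :: "'a set"
    and p :: "'s \<Rightarrow> 'a \<Rightarrow> 's measure" and r :: "'s \<Rightarrow> 'a \<Rightarrow> real"
    and \<gamma> Rmax :: real and \<rho>0 \<rho>1 :: "'s measure"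
    and \<pi> \<pi>' :: "'s \<Rightarrow> 'a" and V :: "'s \<Rightarrow> real" and d h :: nat
  assumes A_fin: "finite A" and A_ne: "A \<noteq> {}"
    and kernel: "\<forall>a\<in>A. (\<lambda>s. p s a) \<in> M \<rightarrow>\<^sub>M prob_algebra M"
    and r_meas: "\<forall>a\<in>A. (\<lambda>s. r s a) \<in> borel_measurable M"
    and r_bnd: "\<forall>s\<in>space M. \<forall>a\<in>A. 0 \<le> r s a \<and> r s a \<le> Rmax"
    and gamma: "0 \<le> \<gamma>" "\<gamma> < 1"
    and rho0: "\<rho>0 \<in> space (prob_algebra M)"
    and rho1: "\<rho>1 \<in> space (prob_algebra M)"
    and conc_ac: "\<forall>m\<ge>1. \<forall>\<mu>s. length \<mu>s = m \<and> set \<mu>s \<subseteq> policies M A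
                    \<longrightarrow> absolutely_continuous \<rho>0 (push_list p \<rho>1 \<mu>s)"
    and conc_fin: "\<forall>m\<ge>1. conc_coeff M A p \<rho>0 \<rho>1 m < \<infinity>"
    and pi: "\<pi> \<in> policies M A" and pi': "\<pi>' \<in> policies M A"
    and V_meas: "V \<in> borel_measurable M"
    and V_bnd: "\<forall>s\<in>space M. 0 \<le> V s \<and> V s \<le> Rmax / (1 - \<gamma>)"
    and d: "d \<ge> 1"
  shows "norm1 \<rho>1 (\<lambda>s. (Topt A p r \<gamma> ^^ d) (Vpol M p r \<gamma> \<pi>) s - Tpol p r \<gamma> \<pi>' (Vpol M p r \<gamma> \<pi>) s)
         \<le> (\<gamma> * enn2real (conc_coeff M A p \<rho>0 \<rho>1 1)
              + \<gamma> ^ (d + h) * enn2real (conc_coeff M A p \<rho>0 \<rho>1 (d + h)))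
             * norm1 \<rho>0 (\<lambda>s. V s - Vpol M p r \<gamma> \<pi> s)
           + norm1 \<rho>1 (\<lambda>s. (Topt A p r \<gamma> ^^ d) ((Tpol p r \<gamma> \<pi> ^^ h) V) s - Tpol p r \<gamma> \<pi>' V s)"
proof -
  interpret mdp M A p r \<gamma> Rmax
    using A_fin A_ne kernel r_meas r_bnd gamma by unfold_locales auto
  define W where "W = Vpol M p r \<gamma> \<pi>"
  define J where "J = (Tpol p r \<gamma> \<pi> ^^ h) V"
  define D where "D = (\<lambda>t. \<bar>W t - V t\<bar>)"
  define T where "T = Topt A p r \<gamma> ^^ d"
  have bV: "bm V" unfolding bm_def
  proof (intro conjI V_meas exI)
    show "\<forall>s\<in>space M. \<bar>V s\<bar> \<le> Rmax / (1 - \<gamma>)" using V_bnd by auto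
  qed
  have bW: "bm W" unfolding W_def by (rule bm_Vpol[OF pi])
  have bJ: "bm J" unfolding J_def by (rule bm_Tpol_iter[OF pi bV])
  have bD: "bm D" unfolding D_def by (intro bm_abs bm_diff bW bV)
  have D0: "\<forall>s\<in>space M. 0 \<le> D s" unfolding D_def by simp
  obtain \<mu>s where l: "length \<mu>s = d" and p\<mu>s: "set \<mu>s \<subseteq> policies M A"
    and le1: "\<forall>s\<in>space M. \<bar>T W s - T J s\<bar> \<le> \<gamma> ^ d * G \<mu>s (\<lambda>t. \<bar>W t - J t\<bar>) s"
    using Topt_iter_diff[OF bW bJ, of d] unfolding T_def by blast
  have le2: "\<forall>s\<in>space M. \<bar>W s - J s\<bar> \<le> \<gamma> ^ h * G (replicate h \<pi>) D s"
    using Tpol_iter_diff[OF pi bV, of h] unfolding W_def J_def D_def .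
  have prep: "set (replicate h \<pi>) \<subseteq> policies M A" using pi by auto
  have pall: "set (\<mu>s @ replicate h \<pi>) \<subseteq> policies M A" using p\<mu>s prep by simp
  have p1: "set [\<pi>'] \<subseteq> policies M A" using pi' by simp
  have bTW: "bm (T W)" "bm (T J)" unfolding T_def by (intro bm_Topt_iter bW bJ)+
  have bTp: "bm (Tpol p r \<gamma> \<pi>' W)" "bm (Tpol p r \<gamma> \<pi>' V)" by (intro bm_Tpol pi' bW bV)+
  have bG1: "bm (G (\<mu>s @ replicate h \<pi>) D)" by (rule bm_G[OF pall bD])
  have bG2: "bm (G [\<pi>'] D)" by (rule bm_G[OF p1 bD])
  have pt: "\<bar>T W s - Tpol p r \<gamma> \<pi>' W s\<bar>
      \<le> \<bar>T J s - Tpol p r \<gamma> \<pi>' V s\<bar> + \<gamma> ^ (d + h) * G (\<mu>s @ replicate h \<pi>) D s + \<gamma> * G [\<pi>'] D s"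
    if s: "s \<in> space M" for s
  proof -
    have "G \<mu>s (\<lambda>t. \<bar>W t - J t\<bar>) s \<le> G \<mu>s (\<lambda>t. \<gamma> ^ h * G (replicate h \<pi>) D t) s"
      using G_mono[OF p\<mu>s bm_abs[OF bm_diff[OF bW bJ]] bm_cmult[OF bm_G[OF prep bD]] le2] s by blast
    then have "\<gamma> ^ d * G \<mu>s (\<lambda>t. \<bar>W t - J t\<bar>) s \<le> \<gamma> ^ d * G \<mu>s (\<lambda>t. \<gamma> ^ h * G (replicate h \<pi>) D t) s"
      using gamma(1) by (simp add: mult_left_mono)
    also have "\<dots> = \<gamma> ^ (d + h) * G (\<mu>s @ replicate h \<pi>) D s"
      by (simp add: G_cmult G_append power_add)
    finally have a: "\<bar>T W s - T J s\<bar> \<le> \<gamma> ^ (d + h) * G (\<mu>s @ replicate h \<pi>) D s"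
      using le1 s by fastforce
    have "Tpol p r \<gamma> \<pi>' V s - Tpol p r \<gamma> \<pi>' W s = \<gamma> * P \<pi>' (\<lambda>t. V t - W t) s"
      by (simp add: Tpol_eq P_diff[OF pi' s bV bW] algebra_simps)
    then have "\<bar>Tpol p r \<gamma> \<pi>' V s - Tpol p r \<gamma> \<pi>' W s\<bar> = \<gamma> * \<bar>P \<pi>' (\<lambda>t. V t - W t) s\<bar>"
      using gamma(1) by (simp add: abs_mult)
    also have "\<dots> \<le> \<gamma> * P \<pi>' (\<lambda>t. \<bar>V t - W t\<bar>) s"
      by (rule mult_left_mono[OF P_abs[OF pi' s bm_diff[OF bV bW]] gamma(1)])
    also have "(\<lambda>t. \<bar>V t - W t\<bar>) = D" unfolding D_def by (simp add: abs_minus_commute)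
    finally have b: "\<bar>Tpol p r \<gamma> \<pi>' V s - Tpol p r \<gamma> \<pi>' W s\<bar> \<le> \<gamma> * G [\<pi>'] D s" by simp
    have e: "T W s - Tpol p r \<gamma> \<pi>' W s = ((T W s - T J s) + (T J s - Tpol p r \<gamma> \<pi>' V s)) + (Tpol p r \<gamma> \<pi>' V s - Tpol p r \<gamma> \<pi>' W s)"
      by simp
    show ?thesis unfolding e
      using abs_triangle_ineq[of "(T W s - T J s) + (T J s - Tpol p r \<gamma> \<pi>' V s)" "Tpol p r \<gamma> \<pi>' V s - Tpol p r \<gamma> \<pi>' W s"]
        abs_triangle_ineq[of "T W s - T J s" "T J s - Tpol p r \<gamma> \<pi>' V s"] a b
      by linarith
  qed
  have r1: "prob_space \<rho>1" "sets \<rho>1 = sets M" using rho1 by (auto simp: space_prob_algebra)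
  have r0: "prob_space \<rho>0" "sets \<rho>0 = sets M" using rho0 by (auto simp: space_prob_algebra)
  have sp1: "space \<rho>1 = space M" using r1(2) by (rule sets_eq_imp_space_eq)
  have cc: "(\<integral>t. D t \<partial>(push_list p \<rho>1 ms)) \<le> enn2real (conc_coeff M A p \<rho>0 \<rho>1 (length ms)) * (\<integral>t. D t \<partial>\<rho>0)"
    if ms: "length ms \<ge> 1" "set ms \<subseteq> policies M A" for ms
  proof (rule conc_bound[OF rho0 push_list_space[OF rho1 ms(2)]])
    show "absolutely_continuous \<rho>0 (push_list p \<rho>1 ms)" using conc_ac ms by blast
    show "esssup \<rho>0 (RN_deriv \<rho>0 (push_list p \<rho>1 ms)) \<le> conc_coeff M A p \<rho>0 \<rho>1 (length ms)"
      unfolding conc_coeff_def by (rule SUP_upper) (use ms in simp)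
    show "conc_coeff M A p \<rho>0 \<rho>1 (length ms) < \<infinity>" using conc_fin ms by blast
  qed (use bD D0 in auto)
  define N0 where "N0 = (\<integral>t. D t \<partial>\<rho>0)"
  have N0eq: "norm1 \<rho>0 (\<lambda>s. V s - W s) = N0" unfolding norm1_def N0_def D_def by (simp add: abs_minus_commute)
  have N0nn: "0 \<le> N0" unfolding N0_def by (rule integral_nonneg_AE) (use D0 r0 sets_eq_imp_space_eq[OF r0(2)] in auto)
  have i1: "integrable \<rho>1 (\<lambda>s. \<bar>T J s - Tpol p r \<gamma> \<pi>' V s\<bar>)"
    by (rule prob_integrable[OF r1 bm_abs[OF bm_diff[OF bTW(2) bTp(2)]]])
  have i2: "integrable \<rho>1 (\<lambda>s. \<gamma> ^ (d + h) * G (\<mu>s @ replicate h \<pi>) D s)"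
    by (rule prob_integrable[OF r1 bm_cmult[OF bG1]])
  have i3: "integrable \<rho>1 (\<lambda>s. \<gamma> * G [\<pi>'] D s)"
    by (rule prob_integrable[OF r1 bm_cmult[OF bG2]])
  have "norm1 \<rho>1 (\<lambda>s. T W s - Tpol p r \<gamma> \<pi>' W s)
     \<le> (\<integral>s. \<bar>T J s - Tpol p r \<gamma> \<pi>' V s\<bar> + \<gamma> ^ (d + h) * G (\<mu>s @ replicate h \<pi>) D s + \<gamma> * G [\<pi>'] D s \<partial>\<rho>1)"
    unfolding norm1_def
    by (rule integral_mono[OF prob_integrable[OF r1 bm_abs[OF bm_diff[OF bTW(1) bTp(1)]]]])
       (use i1 i2 i3 pt sp1 in auto)
  also have "\<dots> = norm1 \<rho>1 (\<lambda>s. T J s - Tpol p r \<gamma> \<pi>' V s)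
      + \<gamma> ^ (d + h) * (\<integral>s. G (\<mu>s @ replicate h \<pi>) D s \<partial>\<rho>1) + \<gamma> * (\<integral>s. G [\<pi>'] D s \<partial>\<rho>1)"
    unfolding norm1_def using i1 i2 i3 by simp
  also have "(\<integral>s. G (\<mu>s @ replicate h \<pi>) D s \<partial>\<rho>1) \<le> enn2real (conc_coeff M A p \<rho>0 \<rho>1 (d + h)) * N0"
    using cc[of "\<mu>s @ replicate h \<pi>"] G_int[OF rho1 pall bD] pall l d unfolding N0_def by simp
  also have "(\<integral>s. G [\<pi>'] D s \<partial>\<rho>1) \<le> enn2real (conc_coeff M A p \<rho>0 \<rho>1 1) * N0"
    using cc[of "[\<pi>']"] G_int[OF rho1 p1 bD] p1 unfolding N0_def by simp
  finally have fin: "norm1 \<rho>1 (\<lambda>s. T W s - Tpol p r \<gamma> \<pi>' W s)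
     \<le> norm1 \<rho>1 (\<lambda>s. T J s - Tpol p r \<gamma> \<pi>' V s)
      + \<gamma> ^ (d + h) * (enn2real (conc_coeff M A p \<rho>0 \<rho>1 (d + h)) * N0)
      + \<gamma> * (enn2real (conc_coeff M A p \<rho>0 \<rho>1 1) * N0)"
    using gamma(1) by (simp add: mult_left_mono add_mono)
  show ?thesis
    using fin unfolding N0eq[symmetric] T_def W_def J_def by (simp add: algebra_simps)
qed

end
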